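(* Let $f:[-1,1]\to\mathbb{R}$, $\epsilon_0>0$, and let $P_k:[-1,1]\to\mathbb{C}$ be a degree-$k$ polynomial with $\max_{x\in[-1,1]}|f(x)-P_k(x)|\le\epsilon_0$. Let $\gamma:=\max_{x\in[-1,1]}|f(x)|$. Let $\ket{\psi}=\sum_{j=1}^N\psi_j\ket{j}$ with $\psi_j\in\mathbb{R}$ and $\|\ket{\psi}\|_2=1$, and let $\mathcal{N}^2:=\sum_j|f(\psi_j)|^2>0$, $\mathcal{N}_1^2:=\sum_j|P_k(\psi_j)|^2$. Let $\epsilon\in(0,1]$ and $$\Delta_k:=\Big\|\frac{1}{\mathcal{N}}\sum_j f(\psi_j)\ket{j}-\frac{1}{\mathcal{N}_1}\sum_jP_k(\psi_j)\ket{j}\Big\|_2.$$ If $\epsilon_0\le\epsilon\mathcal{N}^2/(8\gamma N)$, then $\Delta_k\le\epsilon$. *)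

theory Defs
  imports Complex_Main "HOL-Computational_Algebra.Polynomial"
begin

end

theory Submission
  imports Defs "HOL-Analysis.Analysis"
begin

lemma L2c_tri:
  "L2_set (\<lambda>i. cmod (x i + y i)) A \<le> L2_set (\<lambda>i. cmod (x i)) A + L2_set (\<lambda>i. cmod (y i)) A"
proof -
  have "L2_set (\<lambda>i. cmod (x i + y i)) A \<le> L2_set (\<lambda>i. cmod (x i) + cmod (y i)) A"
    by (rule L2_set_mono) (auto simp: norm_triangle_ineq)
  also have "\<dots> \<le> L2_set (\<lambda>i. cmod (x i)) A + L2_set (\<lambda>i. cmod (y i)) A"
    by (rule L2_set_triangle_ineq)
  finally show ?thesis .
qed

lemma L2c_rev:
  "\<bar>L2_set (\<lambda>i. cmod (x i)) A - L2_set (\<lambda>i. cmod (y i)) A\<bar> \<le> L2_set (\<lambda>i. cmod (x i - y i)) A"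
proof -
  have 1: "L2_set (\<lambda>i. cmod (x i)) A \<le> L2_set (\<lambda>i. cmod (x i - y i)) A + L2_set (\<lambda>i. cmod (y i)) A"
    using L2c_tri[of "\<lambda>i. x i - y i" y A] by simp
  have 2: "L2_set (\<lambda>i. cmod (y i)) A \<le> L2_set (\<lambda>i. cmod (y i - x i)) A + L2_set (\<lambda>i. cmod (x i)) A"
    using L2c_tri[of "\<lambda>i. y i - x i" x A] by simp
  have "L2_set (\<lambda>i. cmod (y i - x i)) A = L2_set (\<lambda>i. cmod (x i - y i)) A"
    by (simp add: norm_minus_commute)
  with 1 2 show ?thesis by linarith
qed

lemma L2c_scale:
  "L2_set (\<lambda>i. cmod (x i * of_real c)) A = \<bar>c\<bar> * L2_set (\<lambda>i. cmod (x i)) A"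
  by (simp add: L2_set_right_distrib norm_mult mult.commute)

theorem lemma13:
  fixes f :: "real \<Rightarrow> real" and P :: "complex poly" and k :: nat
    and \<epsilon>0 \<epsilon> \<gamma> Nf N1 :: real and N :: nat and \<psi> :: "nat \<Rightarrow> real"
  assumes "\<epsilon>0 > 0"
    and "degree P = k"
    and approx: "\<forall>x\<in>{-1..1}. cmod (complex_of_real (f x) - poly P (complex_of_real x)) \<le> \<epsilon>0"
    and gamma_def: "\<gamma> = Sup ((\<lambda>x. \<bar>f x\<bar>) ` {-1..1})"
    and unit: "(\<Sum>j=1..N. (\<psi> j)\<^sup>2) = 1"
    and Nf_def: "Nf = sqrt (\<Sum>j=1..N. \<bar>f (\<psi> j)\<bar>\<^sup>2)"
    and Nf_pos: "Nf\<^sup>2 > 0"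
    and N1_def: "N1 = sqrt (\<Sum>j=1..N. (cmod (poly P (complex_of_real (\<psi> j))))\<^sup>2)"
    and "0 < \<epsilon>" and "\<epsilon> \<le> 1"
    and small: "\<epsilon>0 \<le> \<epsilon> * Nf\<^sup>2 / (8 * \<gamma> * real N)"
  shows "sqrt (\<Sum>j=1..N. (cmod (complex_of_real (f (\<psi> j)) / complex_of_real Nf
                                  - poly P (complex_of_real (\<psi> j)) / complex_of_real N1))\<^sup>2) \<le> \<epsilon>"
proof -
  define A where "A = {1..N}"
  define a where "a j = complex_of_real (f (\<psi> j))" for j
  define b where "b j = poly P (complex_of_real (\<psi> j))" for j
  have finA: "finite A" by (simp add: A_def)
  have NfL: "Nf = L2_set (\<lambda>j. cmod (a j)) A"
    by (simp add: Nf_def L2_set_def A_def a_def)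
  have N1L: "N1 = L2_set (\<lambda>j. cmod (b j)) A"
    by (simp add: N1_def L2_set_def A_def b_def)
  have goalL: "sqrt (\<Sum>j=1..N. (cmod (complex_of_real (f (\<psi> j)) / complex_of_real Nf
                                  - poly P (complex_of_real (\<psi> j)) / complex_of_real N1))\<^sup>2)
       = L2_set (\<lambda>j. cmod (a j / of_real Nf - b j / of_real N1)) A"
    by (simp add: L2_set_def A_def a_def b_def)
  have Nfp: "Nf > 0"
  proof -
    have "Nf \<ge> 0" using NfL by simp
    moreover have "Nf \<noteq> 0" using Nf_pos by auto
    ultimately show ?thesis by linarith
  qed
  have N1nn: "N1 \<ge> 0" using N1L by simp
  have psi_in: "\<psi> j \<in> {-1..1}" if "j \<in> A" for j
  proof -
    have "(\<psi> j)\<^sup>2 \<le> (\<Sum>j=1..N. (\<psi> j)\<^sup>2)"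
      by (rule member_le_sum) (use that in \<open>auto simp: A_def\<close>)
    then have "(\<psi> j)\<^sup>2 \<le> 1" using unit by simp
    then show ?thesis by (simp add: abs_square_le_1 abs_le_iff)
  qed
  have cont: "continuous_on {-1..1::real} (\<lambda>x. cmod (poly P (complex_of_real x)))"
    by (intro continuous_intros)
  have "compact ((\<lambda>x. cmod (poly P (complex_of_real x))) ` {-1..1::real})"
    by (rule compact_continuous_image[OF cont]) simp
  then obtain B where B: "\<And>x. x \<in> {-1..1::real} \<Longrightarrow> cmod (poly P (complex_of_real x)) \<le> B"
    using compact_imp_bounded bounded_imp_bdd_above unfolding bdd_above_def by fastforce
  have fb: "\<bar>f x\<bar> \<le> B + \<epsilon>0" if "x \<in> {-1..1}" for x
  proof -
    have "\<bar>f x\<bar> = cmod (complex_of_real (f x))" by simp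
    also have "\<dots> \<le> cmod (complex_of_real (f x) - poly P (complex_of_real x)) + cmod (poly P (complex_of_real x))"
      using norm_triangle_ineq[of "complex_of_real (f x) - poly P (complex_of_real x)" "poly P (complex_of_real x)"] by simp
    finally show ?thesis using approx that B[OF that] by fastforce
  qed
  have bdd: "bdd_above ((\<lambda>x. \<bar>f x\<bar>) ` {-1..1::real})"
    using fb by (intro bdd_aboveI2[where M="B + \<epsilon>0"]) auto
  have fg: "\<bar>f x\<bar> \<le> \<gamma>" if "x \<in> {-1..1}" for x
    unfolding gamma_def by (rule cSup_upper) (use that bdd in auto)
  have Nfle: "Nf \<le> sqrt (real N) * \<gamma>"
  proof -
    have "Nf \<le> L2_set (\<lambda>j. \<gamma>) A" unfolding NfL
      by (rule L2_set_mono) (use fg psi_in in \<open>auto simp: a_def\<close>)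
    also have "\<dots> = sqrt (real N) * \<bar>\<gamma>\<bar>" by (simp add: L2_set_constant A_def)
    finally show ?thesis
      using fg[of 0] by simp
  qed
  have gp: "\<gamma> > 0"
  proof -
    have "\<gamma> \<ge> 0" using fg[of 0] by (meson abs_ge_zero atLeastAtMost_iff order_trans neg_le_0_iff_le zero_le_one)
    moreover have "\<gamma> \<noteq> 0" using Nfle Nfp by auto
    ultimately show ?thesis by linarith
  qed
  have Np: "real N > 0"
  proof -
    have "N \<noteq> 0" proof assume "N = 0" then show False using unit by simp qed
    then show ?thesis by simp
  qed
  define D where "D = L2_set (\<lambda>j. cmod (a j - b j)) A"
  have Dle: "D \<le> sqrt (real N) * \<epsilon>0"
  proof -
    have "D \<le> L2_set (\<lambda>j. \<epsilon>0) A" unfolding D_def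
      by (rule L2_set_mono) (use approx psi_in in \<open>auto simp: a_def b_def\<close>)
    also have "\<dots> = sqrt (real N) * \<epsilon>0" using \<open>\<epsilon>0 > 0\<close> by (simp add: L2_set_constant A_def)
    finally show ?thesis .
  qed
  have split: "a j / of_real Nf - b j / of_real N1 = (a j - b j) * of_real (1/Nf) + b j * of_real (1/Nf - 1/N1)" for j
    by (simp add: divide_inverse algebra_simps)
  have T1: "L2_set (\<lambda>j. cmod ((a j - b j) * of_real (1/Nf))) A = D / Nf"
    unfolding L2c_scale D_def using Nfp by simp
  have T2: "L2_set (\<lambda>j. cmod (b j * of_real (1/Nf - 1/N1))) A \<le> D / Nf"
  proof (cases "N1 = 0")
    case True
    then show ?thesis unfolding L2c_scale N1L[symmetric] D_def using Nfp by simp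
  next
    case False
    then have N1p: "N1 > 0" using N1nn by simp
    have "L2_set (\<lambda>j. cmod (b j * of_real (1/Nf - 1/N1))) A = \<bar>1/Nf - 1/N1\<bar> * N1"
      unfolding L2c_scale N1L ..
    also have "\<dots> = \<bar>N1 - Nf\<bar> / Nf"
    proof -
      have e: "(1/Nf - 1/N1) * N1 = (N1 - Nf)/Nf" using N1p Nfp by (simp add: field_simps)
      have "\<bar>1/Nf - 1/N1\<bar> * N1 = \<bar>(1/Nf - 1/N1) * N1\<bar>" using N1p by (simp add: abs_mult)
      also have "\<dots> = \<bar>N1 - Nf\<bar> / Nf" unfolding e using Nfp by simp
      finally show ?thesis .
    qed
    also have "\<bar>N1 - Nf\<bar> \<le> D" using L2c_rev[of a A b] unfolding NfL N1L D_def by (simp add: abs_minus_commute)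
    then have "\<bar>N1 - Nf\<bar> / Nf \<le> D / Nf" using Nfp by (simp add: divide_right_mono)
    finally show ?thesis .
  qed
  have main: "L2_set (\<lambda>j. cmod (a j / of_real Nf - b j / of_real N1)) A \<le> 2 * D / Nf"
    unfolding split using L2c_tri[of "\<lambda>j. (a j - b j) * of_real (1/Nf)" "\<lambda>j. b j * of_real (1/Nf - 1/N1)" A] T1 T2
    by simp
  have "2 * D / Nf \<le> 2 * (sqrt (real N) * \<epsilon>0) / Nf"
    using Dle Nfp by (simp add: divide_right_mono)
  also have "\<dots> \<le> \<epsilon>"
  proof -
    have s: "sqrt (real N) > 0" using Np by simp
    have sq: "sqrt (real N) * sqrt (real N) = real N" using Np by simp
    have "\<epsilon>0 * (8 * \<gamma> * real N) \<le> \<epsilon> * Nf\<^sup>2"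
      using small gp Np by (simp add: pos_le_divide_eq)
    then have "\<epsilon>0 * (8 * \<gamma> * real N) \<le> \<epsilon> * Nf * (sqrt (real N) * \<gamma>)"
    proof -
      have "Nf * Nf \<le> Nf * (sqrt (real N) * \<gamma>)" using Nfle Nfp by (simp add: mult_left_mono)
      then have "\<epsilon> * (Nf * Nf) \<le> \<epsilon> * (Nf * (sqrt (real N) * \<gamma>))" using \<open>0 < \<epsilon>\<close> by (simp add: mult_left_mono)
      then show ?thesis using \<open>\<epsilon>0 * (8 * \<gamma> * real N) \<le> \<epsilon> * Nf\<^sup>2\<close> by (simp add: power2_eq_square mult.assoc)
    qed
    then have "\<epsilon>0 * 8 * sqrt (real N) * (\<gamma> * sqrt (real N)) \<le> \<epsilon> * Nf * (\<gamma> * sqrt (real N))"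
    proof -
      have "\<epsilon>0 * 8 * sqrt (real N) * (\<gamma> * sqrt (real N)) = \<epsilon>0 * (8 * \<gamma> * (sqrt (real N) * sqrt (real N)))"
        by (simp only: mult.assoc mult.left_commute)
      also have "\<dots> = \<epsilon>0 * (8 * \<gamma> * real N)" by (simp only: sq)
      finally have eq: "\<epsilon>0 * 8 * sqrt (real N) * (\<gamma> * sqrt (real N)) = \<epsilon>0 * (8 * \<gamma> * real N)" .
      have "\<epsilon> * Nf * (\<gamma> * sqrt (real N)) = \<epsilon> * Nf * (sqrt (real N) * \<gamma>)" by (simp only: mult.commute)
      then show ?thesis using eq \<open>\<epsilon>0 * (8 * \<gamma> * real N) \<le> \<epsilon> * Nf * (sqrt (real N) * \<gamma>)\<close>
        by linarith
    qed
    then have "\<epsilon>0 * 8 * sqrt (real N) \<le> \<epsilon> * Nf"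
      using gp s by (simp add: mult_le_cancel_right)
    then have "2 * (sqrt (real N) * \<epsilon>0) \<le> \<epsilon> * Nf"
    proof -
      have "0 \<le> sqrt (real N) * \<epsilon>0" using \<open>\<epsilon>0 > 0\<close> s by simp
      moreover have "\<epsilon>0 * 8 * sqrt (real N) = 8 * (sqrt (real N) * \<epsilon>0)" by simp
      ultimately show ?thesis using \<open>\<epsilon>0 * 8 * sqrt (real N) \<le> \<epsilon> * Nf\<close> by linarith
    qed
    then show ?thesis using Nfp by (simp add: divide_le_eq)
  qed
  finally show ?thesis using main goalL by simp
qed

end
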